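(* In the setting described in the context, assume $q$ is a square, let $d=q-\sqrt q+1$ and $t=(q^2+q+1)/d$. Then $t=q+\sqrt q+1$ and $w_u\le 2$ for every $u$. Moreover, for $j=0,1,2$, the number $v_j$ of indices $u\in\{0,\dots,t-1\}$ with $w_u=j$ is $v_0=\frac12(q+\sqrt q)$, $v_1=\sqrt q+1$, $v_2=\frac12(q-\sqrt q)$.
   Context: Let $q=p^h$ with $p$ prime, $h\ge1$. Let $\alpha$ be a primitive element of $\mathbb{F}_{q^3}$; the points of $PG(2,q)$ are the 1-dimensional $\mathbb{F}_q$-subspaces of $\mathbb{F}_{q^3}$, and $P_i$ denotes the point represented by $\alpha^i$, so $PG(2,q)=\{P_0,\dots,P_{q^2+q}\}$. Let $\tau:P_i\mapsto P_{ip\bmod(q^2+q+1)}$ (a collineation) and let $\ell_0$ be a line of $PG(2,q)$ fixed by $\tau$. For a positive divisor $t$ of $q^2+q+1$ and $i=0,\dots,t-1$ let $O_i=\{P_u:u\equiv i\pmod t\}$, and for $u=0,\dots,t-1$ let $w_u=|\ell_0\cap O_u|$. *)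

theory Defs
  imports "HOL-Computational_Algebra.Primes"
begin

definition Fsub :: "nat \<Rightarrow> 'a::field set" where
  "Fsub q = {x. x ^ q = x}"

definition primitive_elem :: "'a::field \<Rightarrow> bool" where
  "primitive_elem a \<longleftrightarrow> a \<noteq> 0 \<and> (\<forall>x. x \<noteq> 0 \<longrightarrow> (\<exists>k::nat. a ^ k = x))"

text \<open>A 2-dimensional F_q-subspace of the ambient field (a line of PG(2,q)).\<close>
definition is_line_subspace :: "nat \<Rightarrow> 'a::field set \<Rightarrow> bool" where
  "is_line_subspace q W \<longleftrightarrow>
     (\<exists>x y. (\<forall>a b. a \<in> Fsub q \<longrightarrow> b \<in> Fsub q \<longrightarrow> a * x + b * y = 0 \<longrightarrow> a = 0 \<and> b = 0) \<and>
            W = {a * x + b * y | a b. a \<in> Fsub q \<and> b \<in> Fsub q})"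

text \<open>Indices i in {0..<q^2+q+1} of the points P_i (represented by alpha^i) lying on the line W.\<close>
definition line_idx :: "nat \<Rightarrow> 'a::field \<Rightarrow> 'a set \<Rightarrow> nat set" where
  "line_idx q a W = {i \<in> {0..<q^2+q+1}. a ^ i \<in> W}"

end

theory Submission
  imports Defs "HOL-Number_Theory.Residues"
begin

lemma shift_exists:
  fixes i j t d m :: nat
  assumes "m = t * d" "i < m" "j < m" "i \<noteq> j" "i mod t = j mod t" "t > 0"
  shows "\<exists>k. 1 \<le> k \<and> k < d \<and> j = (i + k * t) mod m"
proof (cases "i < j")
  case True
  have "t dvd j - i" using assms True by (metis le_less mod_eq_dvd_iff_nat)
  then obtain k where k: "j - i = t * k" by blast
  have "k \<ge> 1" using k True by (cases k) auto
  moreover have "k < d" using k assms True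
    by (metis diff_le_self le_less_trans mult_less_cancel1 order_le_less_trans)
  moreover have "j = (i + k * t) mod m" using k True assms by (simp add: mult.commute)
  ultimately show ?thesis by blast
next
  case False
  hence ji: "j < i" using assms by auto
  have "t dvd i - j" using assms ji by (metis le_less mod_eq_dvd_iff_nat)
  then obtain k where k: "i - j = t * k" by blast
  have k1: "k \<ge> 1" using k ji by (cases k) auto
  have kd: "k < d" using k assms ji
    by (metis diff_le_self le_less_trans mult_less_cancel1 order_le_less_trans)
  have "(d - k) * t = d * t - k * t" by (simp add: diff_mult_distrib)
  moreover have "k * t \<le> d * t" using kd by simp
  ultimately have "i + (d - k) * t = j + m" using k ji assms
    by (simp add: mult.commute)
  hence "(i + (d - k) * t) mod m = j" using assms by simp
  moreover have "1 \<le> d - k" "d - k < d" using k1 kd by auto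
  ultimately show ?thesis by metis
qed

lemma three_elems:
  assumes "3 \<le> card S"
  obtains a b c where "a \<in> S" "b \<in> S" "c \<in> S" "a \<noteq> b" "a \<noteq> c" "b \<noteq> c"
proof -
  from assms have h: "Suc (Suc (Suc 0)) \<le> card S" by simp
  obtain a B where aB: "S = insert a B" "a \<notin> B" "Suc (Suc 0) \<le> card B" "finite B"
    using iffD1[OF card_le_Suc_iff h] by (elim exE conjE)
  obtain b C where bC: "B = insert b C" "b \<notin> C" "Suc 0 \<le> card C" "finite C"
    using iffD1[OF card_le_Suc_iff aB(3)] by (elim exE conjE)
  obtain c D where cD: "C = insert c D" "c \<notin> D"
    using iffD1[OF card_le_Suc_iff bC(3)] by (elim exE conjE)
  show ?thesis using aB bC cD by (intro that[of a b c]) auto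
qed

lemma comb:
  fixes L :: "nat set" and t d m :: nat
  assumes md: "m = t*d" and tpos: "t>0" and dpos: "d>0" and Lsub: "L \<subseteq> {..<m}"
    and shift: "\<And>k. 1 \<le> k \<Longrightarrow> k < d \<Longrightarrow> card {i\<in>L. (i + k*t) mod m \<in> L} = 1"
    and arc: "\<And>i j l. i\<in>L \<Longrightarrow> j\<in>L \<Longrightarrow> l\<in>L \<Longrightarrow> i\<noteq>j \<Longrightarrow> i\<noteq>l \<Longrightarrow> j\<noteq>l
               \<Longrightarrow> i mod t = j mod t \<Longrightarrow> i mod t = l mod t \<Longrightarrow> False"
  defines "w \<equiv> \<lambda>u. card {i\<in>L. i mod t = u}"
  defines "v \<equiv> \<lambda>j. card {u\<in>{0..<t}. w u = j}"
  shows "(\<forall>u. w u \<le> 2) \<and> v 0 + v 1 + v 2 = t \<and> v 1 + 2 * v 2 = card L \<and> 2 * v 2 = d - 1"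
proof -
  have finL: "finite L" using Lsub finite_subset by blast
  have w2: "w u \<le> 2" for u
  proof (rule ccontr)
    assume "\<not> w u \<le> 2"
    hence "3 \<le> card {i\<in>L. i mod t = u}" unfolding w_def by simp
    then obtain a b c where "a \<in> {i\<in>L. i mod t = u}" "b \<in> {i\<in>L. i mod t = u}"
      "c \<in> {i\<in>L. i mod t = u}" "a \<noteq> b" "a \<noteq> c" "b \<noteq> c" by (rule three_elems)
    thus False using arc[of a b c] by auto
  qed
  have vsum: "v j = (\<Sum>u\<in>{0..<t}. if w u = j then 1 else 0)" for j
    unfolding v_def by (simp add: sum.If_cases) (rule arg_cong[where f=card], auto)
  have "v 0 + v 1 + v 2 = (\<Sum>u\<in>{0..<t}. (if w u = 0 then 1 else 0) + (if w u = 1 then 1 else 0)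
     + (if w u = 2 then 1 else 0))" unfolding vsum by (simp add: sum.distrib)
  also have "\<dots> = (\<Sum>u\<in>{0..<t}. 1)"
  proof (rule sum.cong)
    fix u show "(if w u = 0 then 1 else 0) + (if w u = 1 then 1 else 0) + (if w u = 2 then 1 else 0) = (1::nat)"
      using w2[of u] by auto
  qed simp
  finally have v012: "v 0 + v 1 + v 2 = t" by simp
  have sumw: "(\<Sum>u\<in>{0..<t}. w u) = card L"
  proof -
    have "L = (\<Union>u\<in>{0..<t}. {i\<in>L. i mod t = u})" using tpos by auto
    hence "card L = card (\<Union>u\<in>{0..<t}. {i\<in>L. i mod t = u})" by simp
    also have "\<dots> = (\<Sum>u\<in>{0..<t}. card {i\<in>L. i mod t = u})"
      by (rule card_UN_disjoint) (auto simp: finL)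
    finally show ?thesis unfolding w_def by simp
  qed
  have "v 1 + 2 * v 2 = (\<Sum>u\<in>{0..<t}. (if w u = 1 then 1 else 0) + 2 * (if w u = 2 then 1 else 0))"
    unfolding vsum by (simp add: sum.distrib sum_distrib_left)
  also have "\<dots> = (\<Sum>u\<in>{0..<t}. w u)"
  proof (rule sum.cong)
    fix u show "(if w u = 1 then 1 else 0) + 2 * (if w u = 2 then 1 else 0) = w u"
      using w2[of u] by (auto simp: le_Suc_eq numeral_2_eq_2)
  qed simp
  finally have v12: "v 1 + 2 * v 2 = card L" using sumw by simp
  define P where "P = {(i,j). i \<in> L \<and> j \<in> L \<and> i \<noteq> j \<and> i mod t = j mod t}"
  define A where "A = (\<lambda>k. {i\<in>L. (i + k*t) mod m \<in> L})"
  have "bij_betw (\<lambda>(k,i). (i, (i + k*t) mod m)) (Sigma {1..<d} A) P"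
  proof (rule bij_betwI')
    fix x y assume x: "x \<in> Sigma {1..<d} A" and y: "y \<in> Sigma {1..<d} A"
    obtain k i where xx: "x = (k,i)" by force
    obtain k' i' where yy: "y = (k',i')" by force
    show "((\<lambda>(k,i). (i, (i + k*t) mod m)) x = (\<lambda>(k,i). (i, (i + k*t) mod m)) y) = (x = y)"
    proof
      assume eq: "(\<lambda>(k,i). (i, (i + k*t) mod m)) x = (\<lambda>(k,i). (i, (i + k*t) mod m)) y"
      hence ii: "i = i'" and "(i + k*t) mod m = (i + k'*t) mod m" using xx yy by auto
      hence "(k*t + i) mod m = (k'*t + i) mod m" by (simp add: add.commute)
      hence "(k*t) mod m = (k'*t) mod m" using cong_add_rcancel_nat[of "k*t" i "k'*t" m] unfolding cong_def by simp
      moreover have "k*t < m" "k'*t < m" using x y xx yy md tpos by auto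
      ultimately have "k * t = k' * t" by simp
      hence "k = k'" using tpos by simp
      thus "x = y" using xx yy ii by simp
    qed simp
  next
    fix x assume x: "x \<in> Sigma {1..<d} A"
    obtain k i where xx: "x = (k,i)" by force
    have i: "i \<in> L" "(i + k*t) mod m \<in> L" "1 \<le> k" "k < d" using x xx A_def by auto
    have "i < m" using i Lsub by auto
    have kt: "0 < k*t" "k*t < m" using i md tpos by auto
    have "(i + k*t) mod m \<noteq> i"
    proof
      assume "(i + k*t) mod m = i"
      hence "(i + k*t) mod m = i mod m" using \<open>i < m\<close> by simp
      hence "(k*t) mod m = 0 mod m" using cong_add_lcancel_0_nat[of i "k*t" m] unfolding cong_def by simp
      thus False using kt by simp
    qed
    moreover have "((i + k*t) mod m) mod t = i mod t" using md by (simp add: mod_mod_cancel)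
    ultimately show "(\<lambda>(k,i). (i, (i + k*t) mod m)) x \<in> P" using i xx P_def by auto
  next
    fix y assume y: "y \<in> P"
    obtain i j where yy: "y = (i,j)" by force
    have ij: "i \<in> L" "j \<in> L" "i \<noteq> j" "i mod t = j mod t" using y yy P_def by auto
    obtain k where k: "1 \<le> k" "k < d" "j = (i + k * t) mod m"
      using shift_exists[OF md _ _ ij(3,4) tpos] ij Lsub by blast
    show "\<exists>x\<in>Sigma {1..<d} A. y = (\<lambda>(k,i). (i, (i + k*t) mod m)) x"
      using k ij yy A_def by (intro bexI[of _ "(k,i)"]) auto
  qed
  hence "card P = card (Sigma {1..<d} A)" by (simp add: bij_betw_same_card)
  also have "\<dots> = (\<Sum>k\<in>{1..<d}. card (A k))"
    by (rule card_SigmaI) (auto simp: A_def finL)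
  also have "\<dots> = (\<Sum>k\<in>{1..<d}. 1)" using shift A_def by (intro sum.cong) auto
  finally have cardP: "card P = d - 1" by simp
  define S where "S = (\<lambda>u. {i\<in>L. i mod t = u})"
  have "P = (\<Union>u\<in>{0..<t}. S u \<times> S u - (\<lambda>i. (i,i)) ` S u)"
    unfolding P_def S_def using tpos by auto
  hence "card P = (\<Sum>u\<in>{0..<t}. card (S u \<times> S u - (\<lambda>i. (i,i)) ` S u))"
    by (simp, intro card_UN_disjoint) (auto simp: S_def finL)
  also have "\<dots> = (\<Sum>u\<in>{0..<t}. w u * w u - w u)"
  proof (rule sum.cong)
    fix u
    have fS: "finite (S u)" using finL S_def by simp
    have "card (S u \<times> S u - (\<lambda>i. (i,i)) ` S u) = card (S u \<times> S u) - card ((\<lambda>i. (i,i)) ` S u)"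
      by (rule card_Diff_subset) (auto simp: fS)
    also have "card ((\<lambda>i. (i,i)) ` S u) = card (S u)" by (rule card_image) (auto simp: inj_on_def)
    finally show "card (S u \<times> S u - (\<lambda>i. (i,i)) ` S u) = w u * w u - w u"
      by (simp add: card_cartesian_product w_def S_def)
  qed simp
  also have "\<dots> = (\<Sum>u\<in>{0..<t}. 2 * (if w u = 2 then 1 else 0))"
  proof (rule sum.cong)
    fix u show "w u * w u - w u = 2 * (if w u = 2 then 1 else 0)"
      using w2[of u] by (auto simp: le_Suc_eq numeral_2_eq_2)
  qed simp
  also have "\<dots> = 2 * v 2" by (simp add: vsum sum_distrib_left)
  finally have "2 * v 2 = d - 1" using cardP by simp
  thus ?thesis using w2 v012 v12 by blast
qed


lemma nums:
  fixes s q :: nat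
  assumes "s \<ge> 1" "q = s^2"
  shows "q^3 - 1 = (q-1)*(q^2+q+1)" "q^2+q+1 = (s^2+s+1)*(s^2-s+1)"
    "(q-1)*(s^2-s+1) = (s^3+1)*(s-1)" "q - s + 1 = s^2-s+1" "s \<le> s^2"
proof -
  obtain r where r: "s = Suc r" using assms by (cases s) auto
  show "q^3 - 1 = (q-1)*(q^2+q+1)" "q^2+q+1 = (s^2+s+1)*(s^2-s+1)"
    "(q-1)*(s^2-s+1) = (s^3+1)*(s-1)" "q - s + 1 = s^2-s+1" "s \<le> s^2"
    using assms by (simp_all add: r power2_eq_square power3_eq_cube algebra_simps)
qed

definition span2 :: "nat \<Rightarrow> 'a::field \<Rightarrow> 'a \<Rightarrow> 'a set" where
  "span2 q u v = {a*u + b*v | a b. a \<in> Fsub q \<and> b \<in> Fsub q}"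

definition indep2 :: "nat \<Rightarrow> 'a::field \<Rightarrow> 'a \<Rightarrow> bool" where
  "indep2 q u v \<longleftrightarrow> (\<forall>a b. a \<in> Fsub q \<longrightarrow> b \<in> Fsub q \<longrightarrow> a*u + b*v = 0 \<longrightarrow> a = 0 \<and> b = 0)"

lemma pigeon:
  assumes "finite B" "f ` A \<subseteq> B" "card B < card A" "finite A"
  shows "\<exists>x\<in>A. \<exists>y\<in>A. x \<noteq> y \<and> f x = f y"
  using card_inj_on_le[of f A B] assms unfolding inj_on_def by force

locale setting =
  fixes \<alpha> :: "'a::{field,finite}" and q s :: nat and x0 y0 :: 'a and W :: "'a set"
  assumes frob: "\<And>u v. (u + v :: 'a)^s = u^s + v^s"
  and qs: "q = s^2" and s2: "s \<ge> 2"
  and card: "card (UNIV::'a set) = q^3"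
  and prim: "primitive_elem \<alpha>"
  and indep: "indep2 q x0 y0"
  and Wdef: "W = span2 q x0 y0"
begin

abbreviation "E \<equiv> q^3 - 1"
abbreviation "m \<equiv> q^2 + q + 1"
abbreviation "F \<equiv> Fsub q :: 'a set"

lemma frob_pow: "(u + v :: 'a)^(s^k) = u^(s^k) + v^(s^k)"
proof (induction k)
  case (Suc k)
  have "(u + v)^(s^Suc k) = ((u+v)^(s^k))^s" by (simp only: power_Suc2 power_mult)
  also have "\<dots> = (u^(s^k))^s + (v^(s^k))^s" by (simp add: Suc frob)
  finally show ?case by (simp only: power_Suc2 power_mult)
qed simp

lemma frob_pow_diff: "(u - v :: 'a)^(s^k) = u^(s^k) - v^(s^k)"
proof -
  have "u^(s^k) = ((u - v) + v)^(s^k)" by simp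
  also have "\<dots> = (u-v)^(s^k) + v^(s^k)" by (rule frob_pow)
  finally show ?thesis by simp
qed

lemma frob_s_diff: "(u - v :: 'a)^s = u^s - v^s"
  using frob_pow_diff[of u v 1] by simp

lemma frob_q: "(u + v :: 'a)^q = u^q + v^q"
  using frob_pow[of u v 2] qs by simp

lemma frob_q_diff: "(u - v :: 'a)^q = u^q - v^q"
  using frob_pow_diff[of u v 2] qs by simp

lemma q_ge: "q \<ge> 4"
proof -
  have "s*s \<ge> 2*2" using s2 by (intro mult_mono) auto
  thus ?thesis using qs by (simp add: power2_eq_square)
qed

lemma E_pos: "E > 0"
proof -
  have "q^3 \<ge> 4^3" using q_ge by (rule power_mono) simp
  thus ?thesis by simp
qed

lemma E_eq: "E = (q-1)*m"
  using nums(1)[of s q] s2 qs by simp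

lemma alpha_nz: "\<alpha> \<noteq> 0" using prim by (simp add: primitive_elem_def)

lemma card_nz: "card {x::'a. x \<noteq> 0} = E"
proof -
  have "{x::'a. x \<noteq> 0} = UNIV - {0}" by auto
  thus ?thesis using card by (simp add: card_Diff_subset)
qed

lemma period_bound:
  assumes "0 < n" "\<alpha>^n = 1"
  shows "E \<le> n"
proof -
  have "{x::'a. x \<noteq> 0} \<subseteq> (\<lambda>k. \<alpha>^k) ` {..<n}"
  proof
    fix x :: 'a assume "x \<in> {x. x \<noteq> 0}"
    then obtain k where k: "\<alpha>^k = x" using prim by (auto simp: primitive_elem_def)
    have "\<alpha>^k = \<alpha>^(n*(k div n) + k mod n)" by (simp only: mult_div_mod_eq)
    also have "\<dots> = \<alpha>^(k mod n)" by (simp only: power_add power_mult assms power_one mult_1_left)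
    finally show "x \<in> (\<lambda>k. \<alpha>^k) ` {..<n}" using k assms by auto
  qed
  hence "card {x::'a. x \<noteq> 0} \<le> card ((\<lambda>k. \<alpha>^k) ` {..<n})" by (intro card_mono) auto
  also have "\<dots> \<le> n" using card_image_le[of "{..<n}" "\<lambda>k. \<alpha>^k"] by simp
  finally show ?thesis using card_nz by simp
qed

lemma alpha_E: "\<alpha>^E = 1"
proof -
  have "(\<lambda>k. \<alpha>^k) ` {0..E} \<subseteq> {x. x \<noteq> 0}" using alpha_nz by auto
  moreover have "card {x::'a. x \<noteq> 0} < card {0..E}" using card_nz by simp
  ultimately obtain a b where ab: "a \<in> {0..E}" "b \<in> {0..E}" "a \<noteq> b" "\<alpha>^a = \<alpha>^b"
    using pigeon[of "{x::'a. x \<noteq> 0}" "\<lambda>k. \<alpha>^k" "{0..E}"] by auto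
  have gen: "\<alpha>^E = 1" if "a \<le> E" "b \<le> E" "a < b" "\<alpha>^a = \<alpha>^b" for a b
  proof -
    have "\<alpha>^b = \<alpha>^(a + (b-a))" using that by simp
    hence "\<alpha>^b = \<alpha>^a * \<alpha>^(b-a)" by (simp only: power_add)
    hence "\<alpha>^(b-a) = 1" using that alpha_nz by simp
    hence "E \<le> b - a" using period_bound that by simp
    hence "b - a = E" using that by simp
    thus ?thesis using \<open>\<alpha>^(b-a) = 1\<close> by simp
  qed
  show ?thesis
  proof (cases "a < b")
    case True thus ?thesis using gen ab by auto
  next
    case False thus ?thesis using gen[of b a] ab by auto
  qed
qed

lemma pow_mod_E: "\<alpha>^k = \<alpha>^(k mod E)"
proof -
  have "\<alpha>^k = \<alpha>^(E*(k div E) + k mod E)" by (simp only: mult_div_mod_eq)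
  also have "\<dots> = \<alpha>^(k mod E)" by (simp only: power_add power_mult alpha_E power_one mult_1_left)
  finally show ?thesis .
qed

lemma pow_eq_iff: "\<alpha>^a = \<alpha>^b \<longleftrightarrow> a mod E = b mod E"
proof
  assume "a mod E = b mod E" thus "\<alpha>^a = \<alpha>^b" by (metis pow_mod_E)
next
  assume eq: "\<alpha>^a = \<alpha>^b"
  define a' b' where "a' = a mod E" and "b' = b mod E"
  have lt: "a' < E" "b' < E" using E_pos a'_def b'_def by auto
  have eq': "\<alpha>^a' = \<alpha>^b'" using eq pow_mod_E a'_def b'_def by metis
  have gen: False if "x < y" "y < E" "\<alpha>^x = \<alpha>^y" for x y
  proof -
    have "\<alpha>^y = \<alpha>^(x + (y-x))" using that by simp
    hence "\<alpha>^y = \<alpha>^x * \<alpha>^(y-x)" by (simp only: power_add)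
    hence "\<alpha>^(y-x) = 1" using that alpha_nz by simp
    hence "E \<le> y - x" using period_bound that by simp
    thus False using that by simp
  qed
  show "a mod E = b mod E"
  proof (rule ccontr)
    assume "a mod E \<noteq> b mod E"
    hence "a' < b' \<or> b' < a'" using a'_def b'_def by auto
    thus False using gen[of a' b'] gen[of b' a'] lt eq' by auto
  qed
qed

lemma nz_rep: "x \<noteq> 0 \<Longrightarrow> \<exists>k<E. x = \<alpha>^k"
proof -
  assume "x \<noteq> 0"
  then obtain k where "\<alpha>^k = x" using prim by (auto simp: primitive_elem_def)
  thus ?thesis using pow_mod_E[of k] E_pos by (intro exI[of _ "k mod E"]) auto
qed

lemma pow_all: "(x::'a)^(q^3) = x"
proof (cases "x = 0")
  case True thus ?thesis using q_ge by simp
next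
  case False
  then obtain k where k: "x = \<alpha>^k" using nz_rep by blast
  have "x^(q^3) = \<alpha>^(k*(q^3))" using k by (simp add: power_mult)
  also have "\<dots> = \<alpha>^k" unfolding pow_eq_iff
  proof -
    have "k*(q^3) = k + k*E" using E_pos by (simp add: algebra_simps)
    thus "k * q ^ 3 mod E = k mod E" by simp
  qed
  finally show ?thesis using k by simp
qed

lemma F_iff: "x \<in> F \<longleftrightarrow> x^q = x" by (simp add: Fsub_def)

lemma F_0: "0 \<in> F" using q_ge by (simp add: F_iff)
lemma F_1: "1 \<in> F" by (simp add: F_iff)
lemma F_add: "a \<in> F \<Longrightarrow> b \<in> F \<Longrightarrow> a + b \<in> F" by (simp add: F_iff frob_q)
lemma F_diff: "a \<in> F \<Longrightarrow> b \<in> F \<Longrightarrow> a - b \<in> F" by (simp add: F_iff frob_q_diff)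
lemma F_mult: "a \<in> F \<Longrightarrow> b \<in> F \<Longrightarrow> a * b \<in> F" by (simp add: F_iff power_mult_distrib)
lemma F_uminus: "a \<in> F \<Longrightarrow> - a \<in> F" using F_diff[OF F_0] by simp
lemma F_inverse: "a \<in> F \<Longrightarrow> inverse a \<in> F" by (simp add: F_iff power_inverse)
lemma F_divide: "a \<in> F \<Longrightarrow> b \<in> F \<Longrightarrow> a / b \<in> F" by (simp add: divide_inverse F_mult F_inverse)

lemma pow_in_F: "\<alpha>^k \<in> F \<longleftrightarrow> m dvd k"
proof -
  have "\<alpha>^k \<in> F \<longleftrightarrow> \<alpha>^(k*q) = \<alpha>^k" by (simp add: F_iff power_mult)
  also have "\<dots> \<longleftrightarrow> (k*q) mod E = k mod E" by (rule pow_eq_iff)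
  also have "\<dots> \<longleftrightarrow> E dvd (k*q - k)" by (rule mod_eq_dvd_iff_nat) (use q_ge in simp)
  also have "k*q - k = (q-1)*k" by (simp add: algebra_simps diff_mult_distrib2)
  also have "E dvd (q-1)*k \<longleftrightarrow> m dvd k" by (simp only: E_eq nat_mult_dvd_cancel_disj) (use q_ge in simp)
  finally show ?thesis .
qed

lemma F_nz_rep: "x \<in> F \<Longrightarrow> x \<noteq> 0 \<Longrightarrow> \<exists>j<q-1. x = \<alpha>^(j*m)"
proof -
  assume x: "x \<in> F" "x \<noteq> 0"
  then obtain k where k: "k < E" "x = \<alpha>^k" using nz_rep by blast
  hence "m dvd k" using x pow_in_F by simp
  then obtain j where j: "k = j*m" by (auto simp: mult.commute)
  have "j*m < (q-1)*m" using k(1) by (simp only: j E_eq)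
  hence "j < q-1" using mult_less_cancel2[of j m "q-1"] by blast
  thus ?thesis using j k by blast
qed

lemma alpha_m_F: "\<alpha>^(j*m) \<in> F" unfolding pow_in_F by (rule dvd_triv_right)

lemma card_F: "card F = q"
proof -
  have "F = insert 0 ((\<lambda>j. \<alpha>^(j*m)) ` {..<q-1})"
    using F_0 alpha_m_F F_nz_rep by auto
  moreover have "0 \<notin> (\<lambda>j. \<alpha>^(j*m)) ` {..<q-1}" using alpha_nz by auto
  moreover have "inj_on (\<lambda>j. \<alpha>^(j*m)) {..<q-1}"
  proof (rule inj_onI)
    fix i j assume ij: "i \<in> {..<q-1}" "j \<in> {..<q-1}" "\<alpha>^(i*m) = \<alpha>^(j*m)"
    have "i*m < (q-1)*m" by (rule mult_strict_right_mono) (use ij in auto)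
    moreover have "j*m < (q-1)*m" by (rule mult_strict_right_mono) (use ij in auto)
    ultimately have "i*m < E" "j*m < E" by (simp_all only: E_eq)
    hence "i*m = j*m" using ij pow_eq_iff by simp
    thus "i = j" using mult_cancel2[of i m j] by auto
  qed
  ultimately have "card F = Suc (q-1)" by (simp add: card_image)
  thus ?thesis using q_ge by simp
qed

lemma F_nz_pow: "x \<in> F \<Longrightarrow> x \<noteq> 0 \<Longrightarrow> x^(q-1) = 1"
proof -
  assume x: "x \<in> F" "x \<noteq> 0"
  have "x^(q-1) * x = x^q" using q_ge by (simp add: power_Suc2[symmetric])
  thus ?thesis using x F_iff by simp
qed

lemma finF: "finite F" by simp

end

context setting begin

lemma span_image: "span2 q u v = (\<lambda>(a,b). a*u + b*v) ` (F \<times> F)"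
  for u v z1 z2 z c :: 'a
  unfolding span2_def by auto

lemma card_span_le: "card (span2 q u v) \<le> q*q"
  for u v z1 z2 z c :: 'a
proof -
  have "card (span2 q u v) \<le> card (F \<times> F)" unfolding span_image by (rule card_image_le) simp
  thus ?thesis by (simp add: card_cartesian_product card_F)
qed

lemma card_span: "indep2 q u v \<Longrightarrow> card (span2 q u v) = q*q"
  for u v z1 z2 z c :: 'a
proof -
  assume ind: "indep2 q u v"
  have "inj_on (\<lambda>(a,b). a*u + b*v) (F \<times> F)"
  proof (rule inj_onI, clarify)
    fix a b a' b' assume h: "a \<in> F" "b \<in> F" "a' \<in> F" "b' \<in> F" "a*u + b*v = a'*u + b'*v"
    hence "(a - a')*u + (b - b')*v = 0" by (simp add: algebra_simps)
    hence "a - a' = 0 \<and> b - b' = 0" using ind h F_diff unfolding indep2_def by blast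
    thus "a = a' \<and> b = b'" by simp
  qed
  hence "card (span2 q u v) = card (F \<times> F)" unfolding span_image by (rule card_image)
  thus ?thesis by (simp add: card_cartesian_product card_F)
qed

lemma span_add: "z1 \<in> span2 q u v \<Longrightarrow> z2 \<in> span2 q u v \<Longrightarrow> z1 + z2 \<in> span2 q u v"
  for u v z1 z2 z c :: 'a
proof -
  assume "z1 \<in> span2 q u v" "z2 \<in> span2 q u v"
  then obtain a b a' b' where h: "a \<in> F" "b \<in> F" "a' \<in> F" "b' \<in> F" "z1 = a*u + b*v" "z2 = a'*u+b'*v"
    unfolding span2_def by blast
  hence "z1 + z2 = (a+a')*u + (b+b')*v" by (simp add: algebra_simps)
  thus ?thesis using h F_add unfolding span2_def by blast
qed

lemma span_scal: "c \<in> F \<Longrightarrow> z \<in> span2 q u v \<Longrightarrow> c * z \<in> span2 q u v"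
  for u v z1 z2 z c :: 'a
proof -
  assume c: "c \<in> F" and "z \<in> span2 q u v"
  then obtain a b where h: "a \<in> F" "b \<in> F" "z = a*u + b*v"
    unfolding span2_def by blast
  hence "c * z = (c*a)*u + (c*b)*v" by (simp add: algebra_simps)
  thus ?thesis using h c F_mult unfolding span2_def by blast
qed

lemma span_u: "u \<in> span2 q u v"
  for u v z1 z2 z c :: 'a
proof -
  have "u = 1*u + 0*v" by simp
  thus ?thesis using F_0 F_1 unfolding span2_def by blast
qed

lemma span_v: "v \<in> span2 q u v"
  for u v z1 z2 z c :: 'a
proof -
  have "v = 0*u + 1*v" by simp
  thus ?thesis using F_0 F_1 unfolding span2_def by blast
qed

lemma span_0: "0 \<in> span2 q u v"
  for u v z1 z2 z c :: 'a
  using span_scal[OF F_0 span_u] by simp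

lemma span_sub: "z1 \<in> span2 q u v \<Longrightarrow> z2 \<in> span2 q u v \<Longrightarrow> span2 q z1 z2 \<subseteq> span2 q u v"
  for u v z1 z2 z c :: 'a
proof
  fix z assume z1: "z1 \<in> span2 q u v" and z2: "z2 \<in> span2 q u v" and "z \<in> span2 q z1 z2"
  then obtain a b where "a \<in> F" "b \<in> F" "z = a*z1 + b*z2" unfolding span2_def by blast
  thus "z \<in> span2 q u v" using span_add[OF span_scal[OF _ z1] span_scal[OF _ z2]] by blast
qed

lemma span_eq:
  fixes u v z1 z2 :: 'a
  assumes "indep2 q z1 z2" "indep2 q u v" "z1 \<in> span2 q u v" "z2 \<in> span2 q u v"
  shows "span2 q z1 z2 = span2 q u v"
proof (rule card_subset_eq)
  show "finite (span2 q u v)" by (rule finite)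
  show "span2 q z1 z2 \<subseteq> span2 q u v" by (rule span_sub[OF assms(3,4)])
  show "card (span2 q z1 z2) = card (span2 q u v)"
    by (simp only: card_span[OF assms(1)] card_span[OF assms(2)])
qed

lemma dep3:
  fixes u v u1 u2 u3 :: 'a
  assumes "u1 \<in> span2 q u v" "u2 \<in> span2 q u v" "u3 \<in> span2 q u v"
  shows "\<exists>a b c. a \<in> F \<and> b \<in> F \<and> c \<in> F \<and> \<not>(a = 0 \<and> b = 0 \<and> c = 0) \<and> a*u1 + b*u2 + c*u3 = 0"
proof -
  define f where "f = (\<lambda>(a,b,c). a*u1 + b*u2 + c*u3)"
  have h1: "f ` (F \<times> F \<times> F) \<subseteq> span2 q u v"
  proof (rule image_subsetI)
    fix x assume "x \<in> F \<times> F \<times> F"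
    then obtain a b c where x: "x = (a,b,c)" "a \<in> F" "b \<in> F" "c \<in> F" by blast
    have "f x = a*u1 + b*u2 + c*u3" unfolding f_def x by simp
    thus "f x \<in> span2 q u v"
      using span_add[OF span_add[OF span_scal[OF x(2) assms(1)] span_scal[OF x(3) assms(2)]]
        span_scal[OF x(4) assms(3)]] by simp
  qed
  have h2: "card (span2 q u v) < card (F \<times> F \<times> F)"
  proof -
    have "q*q < q*(q*q)" using q_ge by simp
    moreover have "card (F \<times> F \<times> F) = q*(q*q)" by (simp add: card_cartesian_product card_F)
    ultimately show ?thesis using card_span_le[of u v] by linarith
  qed
  have "\<exists>x\<in>F \<times> F \<times> F. \<exists>y\<in>F \<times> F \<times> F. x \<noteq> y \<and> f x = f y"
    by (rule pigeon[OF finite h1 h2 finite])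
  then obtain x y where xy: "x \<in> F \<times> F \<times> F" "y \<in> F \<times> F \<times> F" "x \<noteq> y" "f x = f y"
    by meson
  obtain a b c where x: "x = (a,b,c)" by (rule prod_cases3)
  obtain a' b' c' where y: "y = (a',b',c')" by (rule prod_cases3)
  have fx: "f x = a*u1 + b*u2 + c*u3" unfolding f_def x by simp
  have fy: "f y = a'*u1 + b'*u2 + c'*u3" unfolding f_def y by simp
  have "(a-a')*u1 + (b-b')*u2 + (c-c')*u3 = f x - f y" unfolding fx fy by (simp add: algebra_simps)
  hence "(a-a')*u1 + (b-b')*u2 + (c-c')*u3 = 0" using xy(4) by simp
  moreover have "\<not>(a-a' = 0 \<and> b-b' = 0 \<and> c-c' = 0)" using xy(3) x y by auto
  moreover have "a-a' \<in> F" "b-b' \<in> F" "c-c' \<in> F" using xy x y F_diff by auto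
  ultimately show ?thesis by blast
qed

lemma dep4:
  fixes g :: 'a
  shows "\<exists>a b c e. a \<in> F \<and> b \<in> F \<and> c \<in> F \<and> e \<in> F \<and> \<not>(a = 0 \<and> b = 0 \<and> c = 0 \<and> e = 0)
      \<and> g*(a*x0 + b*y0) = c*x0 + e*y0"
proof -
  define f where "f = (\<lambda>(a,b,c,e). g*(a*x0 + b*y0) - (c*x0 + e*y0))"
  have h1: "f ` (F \<times> F \<times> F \<times> F) \<subseteq> UNIV" by simp
  have h2: "card (UNIV::'a set) < card (F \<times> F \<times> F \<times> F)"
  proof -
    have "q*q*q*1 < q*q*q*q" using q_ge by (intro mult_strict_left_mono) auto
    moreover have "card (F \<times> F \<times> F \<times> F) = q*(q*(q*q))" by (simp add: card_cartesian_product card_F)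
    ultimately show ?thesis using card by (simp add: power3_eq_cube mult.assoc)
  qed
  have "\<exists>x\<in>F \<times> F \<times> F \<times> F. \<exists>y\<in>F \<times> F \<times> F \<times> F. x \<noteq> y \<and> f x = f y"
    by (rule pigeon[OF finite h1 h2 finite])
  then obtain x y where xy: "x \<in> F \<times> F \<times> F \<times> F" "y \<in> F \<times> F \<times> F \<times> F" "x \<noteq> y" "f x = f y"
    by meson
  obtain a b c e where x: "x = (a,b,c,e)" by (rule prod_cases4)
  obtain a' b' c' e' where y: "y = (a',b',c',e')" by (rule prod_cases4)
  have fx: "f x = g*(a*x0 + b*y0) - (c*x0 + e*y0)" unfolding f_def x by simp
  have fy: "f y = g*(a'*x0 + b'*y0) - (c'*x0 + e'*y0)" unfolding f_def y by simp
  have "g*((a-a')*x0 + (b-b')*y0) - ((c-c')*x0 + (e-e')*y0) = f x - f y"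
    unfolding fx fy by (simp add: algebra_simps)
  hence "g*((a-a')*x0 + (b-b')*y0) = (c-c')*x0 + (e-e')*y0"
    using xy(4) by simp
  moreover have "\<not>(a-a' = 0 \<and> b-b' = 0 \<and> c-c' = 0 \<and> e-e' = 0)" using xy(3) x y by auto
  moreover have "a-a' \<in> F" "b-b' \<in> F" "c-c' \<in> F" "e-e' \<in> F" using xy x y F_diff by auto
  ultimately show ?thesis by blast
qed

end

context setting begin

abbreviation "L \<equiv> line_idx q \<alpha> W"

lemma W_scal: "c \<in> F \<Longrightarrow> w \<in> W \<Longrightarrow> c*w \<in> W"
  unfolding Wdef by (rule span_scal)

lemma W_scal_iff: "c \<in> F \<Longrightarrow> c \<noteq> 0 \<Longrightarrow> c*w \<in> W \<longleftrightarrow> w \<in> W"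
proof
  assume c: "c \<in> F" "c \<noteq> 0" and "c*w \<in> W"
  hence "inverse c * (c*w) \<in> W" using W_scal F_inverse by blast
  thus "w \<in> W" using c by (simp add: mult.assoc[symmetric])
qed (rule W_scal)

lemma m_pos: "m > 0" by simp

lemma pow_W_mod: "\<alpha>^i \<in> W \<longleftrightarrow> \<alpha>^(i mod m) \<in> W"
proof -
  have "\<alpha>^i = \<alpha>^((i div m)*m + i mod m)" by (simp only: div_mult_mod_eq)
  also have "\<dots> = \<alpha>^((i div m)*m) * \<alpha>^(i mod m)" by (rule power_add)
  finally have eq: "\<alpha>^i = \<alpha>^((i div m)*m) * \<alpha>^(i mod m)" .
  show ?thesis unfolding eq
    by (rule W_scal_iff[OF alpha_m_F]) (simp add: alpha_nz)
qed

lemma m_dvd_E: "m dvd E" unfolding E_eq by (rule dvd_triv_right)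

lemma pow_mod_m: "\<alpha>^a = \<alpha>^b \<Longrightarrow> a mod m = b mod m"
proof -
  assume "\<alpha>^a = \<alpha>^b"
  hence "a mod E = b mod E" using pow_eq_iff by simp
  hence "(a mod E) mod m = (b mod E) mod m" by simp
  thus ?thesis using m_dvd_E by (simp add: mod_mod_cancel)
qed

lemma indep_pts:
  assumes "i < m" "j < m" "i \<noteq> j"
  shows "indep2 q (\<alpha>^i) (\<alpha>^j)"
  unfolding indep2_def
proof (intro allI impI)
  fix a b assume ab: "a \<in> F" "b \<in> F" "a * \<alpha>^i + b * \<alpha>^j = 0"
  show "a = 0 \<and> b = 0"
  proof (cases "b = 0")
    case True thus ?thesis using ab alpha_nz by simp
  next
    case False
    have "b * \<alpha>^j = - (a * \<alpha>^i)" using ab(3) by (simp add: add_eq_0_iff)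
    hence "\<alpha>^j = - (a * \<alpha>^i) / b" using False by (metis nonzero_mult_div_cancel_left)
    hence eq: "\<alpha>^j = (- a / b) * \<alpha>^i" by simp
    have cF: "- a / b \<in> F" using ab F_divide F_uminus by simp
    have "- a / b \<noteq> 0"
    proof
      assume "- a / b = 0" hence "\<alpha>^j = 0" using eq by (metis mult_zero_left)
      thus False using alpha_nz by simp
    qed
    then obtain k where k: "- a / b = \<alpha>^(k*m)" using F_nz_rep cF by blast
    have "\<alpha>^j = \<alpha>^(k*m + i)" using eq k power_add[of \<alpha> "k*m" i] by metis
    hence "j mod m = (k*m + i) mod m" by (rule pow_mod_m)
    hence "j mod m = i mod m" by (simp only: mod_mult_self3)
    hence "j = i" using assms(1,2) by (metis mod_less)
    thus ?thesis using assms by simp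
  qed
qed

lemma L_sub: "L \<subseteq> {..<m}" unfolding line_idx_def by auto

lemma L_mem: "i \<in> L \<longleftrightarrow> i < m \<and> \<alpha>^i \<in> W" unfolding line_idx_def by auto

lemma x0_nz: "x0 \<noteq> 0"
proof
  assume "x0 = 0"
  hence "1 * x0 + 0 * y0 = 0" by simp
  thus False using indep F_0 F_1 unfolding indep2_def by fastforce
qed

lemma card_W: "card W = q*q" unfolding Wdef by (rule card_span[OF indep])

lemma point_rep: "w \<in> W \<Longrightarrow> w \<noteq> 0 \<Longrightarrow> \<exists>c i. c \<in> F \<and> c \<noteq> 0 \<and> i \<in> L \<and> w = c * \<alpha>^i"
proof -
  assume w: "w \<in> W" "w \<noteq> 0"
  then obtain k where k: "w = \<alpha>^k" using nz_rep by blast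
  have eq: "\<alpha>^k = \<alpha>^((k div m)*m) * \<alpha>^(k mod m)"
    by (metis div_mult_mod_eq power_add)
  have "\<alpha>^(k mod m) \<in> W" using w k pow_W_mod by simp
  hence "k mod m \<in> L" using L_mem by simp
  moreover have "\<alpha>^((k div m)*m) \<in> F" "\<alpha>^((k div m)*m) \<noteq> 0" using alpha_m_F alpha_nz by auto
  ultimately show ?thesis using eq k by blast
qed

lemma card_L: "card L = q + 1"
proof -
  have "W - {0} = (\<lambda>(c,i). c * \<alpha>^i) ` ((F - {0}) \<times> L)"
  proof
    show "W - {0} \<subseteq> (\<lambda>(c,i). c * \<alpha>^i) ` ((F - {0}) \<times> L)"
    proof
      fix w assume "w \<in> W - {0}"
      then obtain c i where "c \<in> F" "c \<noteq> 0" "i \<in> L" "w = c * \<alpha>^i" using point_rep by blast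
      thus "w \<in> (\<lambda>(c,i). c * \<alpha>^i) ` ((F - {0}) \<times> L)" by force
    qed
  next
    show "(\<lambda>(c,i). c * \<alpha>^i) ` ((F - {0}) \<times> L) \<subseteq> W - {0}"
      using W_scal L_mem alpha_nz by auto
  qed
  moreover have "inj_on (\<lambda>(c,i). c * \<alpha>^i) ((F - {0}) \<times> L)"
  proof (rule inj_onI)
    fix x y assume hx: "x \<in> (F - {0}) \<times> L" and hy: "y \<in> (F - {0}) \<times> L"
      and heq: "(\<lambda>(c,i). c * \<alpha>^i) x = (\<lambda>(c,i). c * \<alpha>^i) y"
    obtain c i where x: "x = (c,i)" by (rule prod.exhaust)
    obtain c' i' where y: "y = (c',i')" by (rule prod.exhaust)
    have h: "c \<in> F" "c \<noteq> 0" "i \<in> L" "c' \<in> F" "c' \<noteq> 0" "i' \<in> L"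
      "c * \<alpha>^i = c' * \<alpha>^i'" using hx hy heq x y by auto
    have "i = i'"
    proof (rule ccontr)
      assume "i \<noteq> i'"
      hence "indep2 q (\<alpha>^i) (\<alpha>^i')" using indep_pts h L_mem by simp
      moreover have "c * \<alpha>^i + (- c') * \<alpha>^i' = 0" using h by simp
      ultimately have "c = 0" using h F_uminus unfolding indep2_def by blast
      thus False using h by simp
    qed
    moreover have "c = c'" using h \<open>i = i'\<close> alpha_nz by simp
    ultimately show "x = y" using x y by simp
  qed
  ultimately have "card (W - {0}) = card ((F - {0}) \<times> L)" by (simp add: card_image)
  moreover have "card (W - {0}) = q*q - 1" using card_W Wdef span_0 by (simp add: card_Diff_singleton)
  moreover have "card ((F - {0}) \<times> L) = (q - 1) * card L"
    using card_F F_0 by (simp add: card_cartesian_product card_Diff_singleton)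
  moreover have "q*q - 1 = (q-1)*(q+1)" using q_ge by (cases q) auto
  ultimately have "(q-1) * card L = (q-1)*(q+1)" by simp
  moreover have "q - 1 \<noteq> 0" using q_ge by simp
  ultimately show ?thesis using mult_left_cancel by blast
qed

end

context setting begin

lemma frob_mult: "(u * v :: 'a)^q = u^q * v^q" by (rule power_mult_distrib)

lemma frob_poly:
  assumes "a \<in> F" "b \<in> F" "c \<in> F"
  shows "(a + b*r + c*r^2)^q = a + b*r^q + c*(r^q)^2"
proof -
  have "(a + b*r + c*r^2)^q = a^q + b^q*r^q + c^q*(r^2)^q"
    by (simp add: frob_q power_mult_distrib)
  also have "(r^2)^q = (r^q)^2" by (simp add: power_mult[symmetric] mult.commute)
  finally show ?thesis using assms by (simp add: F_iff)
qed

lemma three_roots: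
  fixes a b c r1 r2 r3 :: 'a
  assumes "r1 \<noteq> r2" "r1 \<noteq> r3" "r2 \<noteq> r3"
    and "a + b*r1 + c*r1^2 = 0" "a + b*r2 + c*r2^2 = 0" "a + b*r3 + c*r3^2 = 0"
  shows "a = 0 \<and> b = 0 \<and> c = 0"
proof -
  have e1: "(r1 - r2)*(b + c*(r1+r2)) = (a + b*r1 + c*r1^2) - (a + b*r2 + c*r2^2)"
    by (simp add: algebra_simps power2_eq_square)
  have e2: "(r1 - r3)*(b + c*(r1+r3)) = (a + b*r1 + c*r1^2) - (a + b*r3 + c*r3^2)"
    by (simp add: algebra_simps power2_eq_square)
  have b1: "b + c*(r1+r2) = 0" using e1 assms by simp
  have b2: "b + c*(r1+r3) = 0" using e2 assms by simp
  have "c*(r2 - r3) = (b + c*(r1+r2)) - (b + c*(r1+r3))" by (simp add: algebra_simps)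
  hence "c*(r2 - r3) = 0" using b1 b2 by simp
  hence c0: "c = 0" using assms by simp
  hence "b = 0" using b1 by simp
  moreover have "a = 0" using assms(4) c0 \<open>b = 0\<close> by simp
  ultimately show ?thesis using c0 by simp
qed

lemma quad_F:
  assumes "a \<in> F" "b \<in> F" "c \<in> F" "\<not>(a = 0 \<and> b = 0 \<and> c = 0)" "a + b*\<gamma> + c*\<gamma>^2 = 0"
  shows "\<gamma> \<in> F"
proof -
  have root: "a + b*r^q + c*(r^q)^2 = 0" if "a + b*r + c*r^2 = 0" for r
  proof -
    have "(a + b*r + c*r^2)^q = 0" using that q_ge by simp
    thus ?thesis using frob_poly[OF assms(1-3)] by simp
  qed
  define g1 where "g1 = \<gamma>^q"
  define g2 where "g2 = g1^q"
  have r1: "a + b*g1 + c*g1^2 = 0" unfolding g1_def by (rule root[OF assms(5)])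
  have r2: "a + b*g2 + c*g2^2 = 0" unfolding g2_def by (rule root[OF r1])
  have g3: "g2^q = \<gamma>"
  proof -
    have "g2^q = \<gamma>^(q^3)" unfolding g2_def g1_def by (simp add: power_mult[symmetric] power3_eq_cube)
    thus ?thesis using pow_all by simp
  qed
  have "\<gamma> = g1 \<or> \<gamma> = g2 \<or> g1 = g2" using three_roots[OF _ _ _ assms(5) r1 r2] assms(4) by blast
  moreover have "\<gamma>^q = \<gamma>" if "\<gamma> = g2"
  proof -
    have "\<gamma>^q = g2^q" using that by simp
    thus ?thesis using g3 by simp
  qed
  moreover have "\<gamma>^q = \<gamma>" if "g1 = g2"
  proof -
    have "g2 = g2^q" using that g2_def by simp
    thus ?thesis using g3 that g1_def by simp
  qed
  ultimately have "\<gamma>^q = \<gamma>" using g1_def by auto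
  thus ?thesis by (simp add: F_iff)
qed

lemma x0_W: "x0 \<in> W" unfolding Wdef by (rule span_u)

lemma shift_card:
  assumes "\<not> m dvd g"
  shows "card {i \<in> L. (i + g) mod m \<in> L} = 1"
proof -
  define \<gamma> where "\<gamma> = \<alpha>^g"
  have gF: "\<gamma> \<notin> F" using assms pow_in_F \<gamma>_def by simp
  have memb: "(i + g) mod m \<in> L \<longleftrightarrow> \<gamma> * \<alpha>^i \<in> W" for i
  proof -
    have "(i + g) mod m \<in> L \<longleftrightarrow> \<alpha>^((i+g) mod m) \<in> W" using L_mem by simp
    also have "\<dots> \<longleftrightarrow> \<alpha>^(i+g) \<in> W" using pow_W_mod by simp
    also have "\<alpha>^(i+g) = \<gamma> * \<alpha>^i" unfolding \<gamma>_def by (simp add: power_add mult.commute)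
    finally show ?thesis .
  qed
  obtain a b c e where abce: "a \<in> F" "b \<in> F" "c \<in> F" "e \<in> F" "\<not>(a = 0 \<and> b = 0 \<and> c = 0 \<and> e = 0)"
      "\<gamma>*(a*x0 + b*y0) = c*x0 + e*y0" using dep4[of \<gamma>] by blast
  define z where "z = a*x0 + b*y0"
  have zW: "z \<in> W" using abce unfolding z_def Wdef span2_def by blast
  have gzW: "\<gamma> * z \<in> W" using abce unfolding z_def Wdef span2_def by auto
  have z0: "z \<noteq> 0"
  proof
    assume "z = 0"
    hence ab: "a = 0 \<and> b = 0" using indep abce unfolding indep2_def z_def by blast
    hence "c*x0 + e*y0 = 0" using abce by simp
    hence "c = 0 \<and> e = 0" using indep abce unfolding indep2_def by blast
    thus False using ab abce by simp
  qed
  obtain c' i where ci: "c' \<in> F" "c' \<noteq> 0" "i \<in> L" "z = c' * \<alpha>^i" using point_rep zW z0 by blast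
  have eqg: "\<gamma> * \<alpha>^i = inverse c' * (\<gamma> * z)" using ci by (simp add: field_simps)
  have "\<gamma> * \<alpha>^i \<in> W" unfolding eqg by (rule W_scal[OF F_inverse[OF ci(1)] gzW])
  hence iA: "i \<in> {i \<in> L. (i + g) mod m \<in> L}" using ci memb by simp
  have uniq: "j = i" if jA: "j \<in> {i \<in> L. (i + g) mod m \<in> L}" for j
  proof (rule ccontr)
    assume ji: "j \<noteq> i"
    have ij: "i < m" "j < m" "\<alpha>^i \<in> W" "\<alpha>^j \<in> W" "\<gamma> * \<alpha>^i \<in> W" "\<gamma> * \<alpha>^j \<in> W"
      using iA jA memb L_mem by auto
    have ind: "indep2 q (\<alpha>^i) (\<alpha>^j)" using indep_pts ij ji by simp
    have sp: "span2 q (\<alpha>^i) (\<alpha>^j) = W"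
      using span_eq[OF ind indep] ij unfolding Wdef by simp
    have closed: "\<gamma> * w \<in> W" if wW: "w \<in> W" for w
    proof -
      obtain a b where ab: "a \<in> F" "b \<in> F" "w = a * \<alpha>^i + b * \<alpha>^j"
        using wW sp unfolding span2_def by blast
      have "\<gamma> * w = a * (\<gamma> * \<alpha>^i) + b * (\<gamma> * \<alpha>^j)" using ab by (simp add: algebra_simps)
      thus ?thesis using W_scal ab ij span_add unfolding Wdef by simp
    qed
    have "\<gamma> * x0 \<in> W" using closed x0_W by simp
    hence "\<gamma> * (\<gamma> * x0) \<in> W" using closed by simp
    then obtain a b c where abc: "a \<in> F" "b \<in> F" "c \<in> F" "\<not>(a = 0 \<and> b = 0 \<and> c = 0)"
      "a*x0 + b*(\<gamma>*x0) + c*(\<gamma>*(\<gamma>*x0)) = 0"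
      using dep3[of x0 x0 y0 "\<gamma>*x0" "\<gamma>*(\<gamma>*x0)"] x0_W \<open>\<gamma> * x0 \<in> W\<close> unfolding Wdef by blast
    have "(a + b*\<gamma> + c*\<gamma>^2) * x0 = 0" using abc(5) by (simp add: algebra_simps power2_eq_square)
    hence "a + b*\<gamma> + c*\<gamma>^2 = 0" using x0_nz by simp
    hence "\<gamma> \<in> F" using quad_F abc by blast
    thus False using gF by simp
  qed
  have "{i \<in> L. (i + g) mod m \<in> L} = {i}" using iA uniq by blast
  thus ?thesis by simp
qed

end

context setting begin

definition "tt = s^2+s+1"
definition "dd = s^2-s+1"
definition "D = (q-1)*dd"

lemma m_eq: "m = tt * dd" unfolding tt_def dd_def by (rule nums(2)) (use s2 qs in auto)
lemma E_tD: "E = tt * D"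
proof -
  have "E = (q-1)*(tt*dd)" by (simp only: E_eq m_eq)
  thus ?thesis unfolding D_def by (simp only: ac_simps)
qed
lemma D_eq: "D = (s^3+1)*(s-1)" unfolding D_def dd_def by (rule nums(3)) (use s2 qs in auto)

lemma pow_s_fix: "(x::'a)^D = 1 \<Longrightarrow> (x^(s^3+1))^s = x^(s^3+1)"
proof -
  assume "x^D = 1"
  moreover have "(x^(s^3+1))^(s-1) = x^D" by (simp only: D_eq power_mult)
  ultimately have h: "(x^(s^3+1))^(s-1) = 1" by simp
  have "s = Suc (s-1)" using s2 by simp
  hence "(x^(s^3+1))^s = (x^(s^3+1))^(s-1) * x^(s^3+1)" by (metis power_Suc2)
  thus ?thesis using h by simp
qed

lemma s_fix_F: "(x::'a)^s = x \<Longrightarrow> x \<in> F"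
proof -
  assume h: "x^s = x"
  have "x^q = (x^s)^s" unfolding qs by (simp add: power_mult[symmetric] power2_eq_square)
  thus ?thesis using h F_iff by simp
qed

lemma G_lemma:
  assumes y: "y^D = 1" and ye: "(y+e)^D = 1" and eF: "e \<in> F" and e0: "e \<noteq> 0"
  shows "y \<in> F"
proof -
  define n where "n = s^3"
  define la where "la = y^(n+1)"
  define mu where "mu = (y+e)^(n+1)"
  have las: "la^s = la" using pow_s_fix[OF y] la_def n_def by simp
  have mus: "mu^s = mu" using pow_s_fix[OF ye] mu_def n_def by simp
  have eq: "e^q = e" using eF F_iff by simp
  have esq: "e^(s*s) = e" using eq qs by (simp add: power2_eq_square)
  have en: "e^n = e^s"
  proof -
    have "e^n = (e^(s*s))^s" unfolding n_def by (simp add: power_mult[symmetric] power3_eq_cube)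
    thus ?thesis using esq by simp
  qed
  have yen: "(y+e)^n = y^n + e^s" using frob_pow[of y e 3] en n_def by simp
  have mu_exp: "mu = (y^n + e^s)*(y+e)" unfolding mu_def using yen by (simp add: power_Suc2)
  have la_exp: "la = y^n * y" unfolding la_def by (simp add: power_Suc2)
  define nu where "nu = e*y^n + e^s*y"
  have nu_eq: "nu = mu - la - e^s*e" unfolding nu_def mu_exp la_exp by (simp add: algebra_simps)
  have "(e^s*e)^s = e^(s*s) * e^s" by (simp add: power_mult_distrib power_mult)
  hence ees: "(e^s*e)^s = e^s*e" using esq by simp
  have nus: "nu^s = nu" unfolding nu_eq frob_s_diff using las mus ees by simp
  have quad: "(e*la) + (-nu)*y + e^s*y^2 = 0" unfolding la_exp nu_def
    by (simp add: algebra_simps power2_eq_square)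
  have c1: "e*la \<in> F" using F_mult[OF eF s_fix_F[OF las]] .
  have c2: "-nu \<in> F" using F_uminus[OF s_fix_F[OF nus]] .
  have c3: "e^s \<in> F"
  proof -
    have "(e^s)^q = (e^q)^s" by (simp add: power_mult[symmetric] mult.commute)
    thus ?thesis using eq F_iff by simp
  qed
  have "e^s \<noteq> 0" using e0 by simp
  thus ?thesis using quad_F[OF c1 c2 c3 _ quad] by blast
qed

lemma Gmem:
  assumes "j mod tt = i mod tt"
  shows "(\<alpha>^j / \<alpha>^i)^D = 1"
proof -
  have "(j*D) mod (tt*D) = (i*D) mod (tt*D)" using assms by (simp only: mod_mult_mult2)
  hence "\<alpha>^(j*D) = \<alpha>^(i*D)" using pow_eq_iff E_tD by simp
  moreover have "(\<alpha>^j / \<alpha>^i)^D = \<alpha>^(j*D) / \<alpha>^(i*D)" by (simp add: power_divide power_mult)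
  ultimately show ?thesis using alpha_nz by simp
qed

lemma F_pow_D: "w \<in> F \<Longrightarrow> w \<noteq> 0 \<Longrightarrow> w^D = 1"
proof -
  assume "w \<in> F" "w \<noteq> 0"
  hence "w^(q-1) = 1" by (rule F_nz_pow)
  moreover have "w^D = (w^(q-1))^dd" by (simp only: D_def power_mult)
  ultimately show ?thesis by simp
qed

lemma field_aux:
  fixes u1 u2 u3 a b c :: "'b::field"
  assumes "u1 \<noteq> 0" "b \<noteq> 0"
  shows "(u2/u1 + a/b - (-(c/b))*(u3/u1)) * (b*u1) = a*u1 + b*u2 + c*u3"
  using assms by (simp add: field_simps)

lemma arc:
  assumes L: "i1 \<in> L" "i2 \<in> L" "i3 \<in> L" and dist: "i1 \<noteq> i2" "i1 \<noteq> i3" "i2 \<noteq> i3"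
    and md: "i1 mod tt = i2 mod tt" "i1 mod tt = i3 mod tt"
  shows False
proof -
  have lm: "i1 < m" "i2 < m" "i3 < m" "\<alpha>^i1 \<in> W" "\<alpha>^i2 \<in> W" "\<alpha>^i3 \<in> W" using L L_mem by auto
  obtain a b c where abc: "a \<in> F" "b \<in> F" "c \<in> F" "\<not>(a = 0 \<and> b = 0 \<and> c = 0)"
      "a*\<alpha>^i1 + b*\<alpha>^i2 + c*\<alpha>^i3 = 0"
    using dep3[of "\<alpha>^i1" x0 y0 "\<alpha>^i2" "\<alpha>^i3"] lm unfolding Wdef by blast
  have ind12: "indep2 q (\<alpha>^i1) (\<alpha>^i2)" using indep_pts lm dist by simp
  have ind13: "indep2 q (\<alpha>^i1) (\<alpha>^i3)" using indep_pts lm dist by simp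
  have ind23: "indep2 q (\<alpha>^i2) (\<alpha>^i3)" using indep_pts lm dist by simp
  have c0: "c \<noteq> 0"
  proof
    assume "c = 0"
    hence "a*\<alpha>^i1 + b*\<alpha>^i2 = 0" using abc by simp
    thus False using ind12 abc \<open>c = 0\<close> unfolding indep2_def by blast
  qed
  have b0: "b \<noteq> 0"
  proof
    assume "b = 0"
    hence "a*\<alpha>^i1 + c*\<alpha>^i3 = 0" using abc by simp
    thus False using ind13 abc \<open>b = 0\<close> unfolding indep2_def by blast
  qed
  have a0: "a \<noteq> 0"
  proof
    assume "a = 0"
    hence "b*\<alpha>^i2 + c*\<alpha>^i3 = 0" using abc by simp
    thus False using ind23 abc \<open>a = 0\<close> unfolding indep2_def by blast
  qed
  define y where "y = \<alpha>^i2 / \<alpha>^i1"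
  define z where "z = \<alpha>^i3 / \<alpha>^i1"
  define e where "e = a / b"
  define w where "w = - (c / b)"
  have u1: "\<alpha>^i1 \<noteq> 0" using alpha_nz by simp
  have yD: "y^D = 1" unfolding y_def by (rule Gmem) (use md in simp)
  have zD: "z^D = 1" unfolding z_def by (rule Gmem) (use md in simp)
  have yF: "y \<notin> F"
  proof
    assume yF: "y \<in> F"
    have "y * \<alpha>^i1 + (-1) * \<alpha>^i2 = 0" unfolding y_def using u1 by simp
    hence "(-1::'a) = 0" using ind12 yF F_uminus[OF F_1] unfolding indep2_def by blast
    thus False by simp
  qed
  have eF: "e \<in> F" "e \<noteq> 0" unfolding e_def using abc a0 b0 F_divide by auto
  have wF: "w \<in> F" "w \<noteq> 0" unfolding w_def using abc c0 b0 F_divide F_uminus by auto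
  have "(y + e - w*z) * (b * \<alpha>^i1) = a*\<alpha>^i1 + b*\<alpha>^i2 + c*\<alpha>^i3"
    unfolding y_def z_def e_def w_def by (rule field_aux[OF u1 b0])
  hence "(y + e - w*z) * (b * \<alpha>^i1) = 0" using abc by simp
  hence "y + e - w*z = 0" using u1 b0 by (metis mult_eq_0_iff)
  hence "y + e = w*z" by simp
  hence "(y+e)^D = 1" using zD F_pow_D[OF wF] by (simp add: power_mult_distrib)
  hence "y \<in> F" using G_lemma[OF yD _ eF] by simp
  thus False using yF by simp
qed

end

lemma frob_from_card:
  fixes u v :: "'a::{field,finite}"
  assumes p: "prime p" and card: "card (UNIV :: 'a set) = p ^ n" and sdvd: "s dvd p ^ n"
  shows "(u + v) ^ s = u ^ s + v ^ s"
proof -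
  have pos: "CHAR('a) > 0" by (rule finite_imp_CHAR_pos) simp
  have pc: "prime CHAR('a)" by (rule prime_CHAR_semidom[OF pos])
  have "CHAR('a) dvd p ^ n" using CHAR_dvd_CARD[where 'a='a] card by simp
  hence "CHAR('a) dvd p" using pc prime_dvd_power by blast
  hence cp: "CHAR('a) = p" using pc p primes_dvd_imp_eq by blast
  obtain k where "s = p ^ k" using sdvd divides_primepow_nat[OF p] by blast
  thus ?thesis using freshmans_dream'[OF pc, of s k] cp by simp
qed

context setting begin

lemma main_result:
  defines "w \<equiv> \<lambda>u. card {i\<in>L. i mod tt = u}"
  defines "v \<equiv> \<lambda>j. card {u\<in>{0..<tt}. w u = j}"
  shows "(\<forall>u. w u \<le> 2) \<and> v 0 + v 1 + v 2 = tt \<and> v 1 + 2 * v 2 = q + 1 \<and> 2 * v 2 = dd - 1"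
proof -
  have tpos: "tt > 0" unfolding tt_def by simp
  have dpos: "dd > 0" unfolding dd_def by simp
  have shift: "card {i\<in>L. (i + k*tt) mod m \<in> L} = 1" if "1 \<le> k" "k < dd" for k
  proof (rule shift_card)
    have "0 < k*tt" using that tpos by simp
    moreover have "k*tt < dd*tt" using that tpos by simp
    ultimately show "\<not> m dvd k*tt" unfolding m_eq by (metis dvd_imp_le mult.commute not_le)
  qed
  have arc': "\<And>i j l. i\<in>L \<Longrightarrow> j\<in>L \<Longrightarrow> l\<in>L \<Longrightarrow> i\<noteq>j \<Longrightarrow> i\<noteq>l \<Longrightarrow> j\<noteq>l
               \<Longrightarrow> i mod tt = j mod tt \<Longrightarrow> i mod tt = l mod tt \<Longrightarrow> False"
    by (rule arc)
  have "(\<forall>u. w u \<le> 2) \<and> v 0 + v 1 + v 2 = tt \<and> v 1 + 2 * v 2 = card L \<and> 2 * v 2 = dd - 1"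
    unfolding w_def v_def by (rule comb[OF m_eq tpos dpos L_sub shift arc'])
  thus ?thesis using card_L by simp
qed

end

theorem proposition8:
  fixes \<alpha> :: "'a::{field,finite}" and p h q s :: nat and W :: "'a set"
  assumes "prime p" and "h \<ge> 1" and "q = p ^ h"
    and "card (UNIV :: 'a set) = q ^ 3"
    and "primitive_elem \<alpha>"
    and "is_line_subspace q W"
    and "(\<lambda>i. (i * p) mod (q^2+q+1)) ` line_idx q \<alpha> W = line_idx q \<alpha> W"
    and "q = s ^ 2"
  defines "d \<equiv> q - s + 1"
  defines "t \<equiv> (q^2+q+1) div d"
  defines "w \<equiv> (\<lambda>u. card {i \<in> line_idx q \<alpha> W. i mod t = u})"
  defines "v \<equiv> (\<lambda>j. card {u \<in> {0..<t}. w u = j})"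
  shows "d dvd (q^2+q+1) \<and> t = q + s + 1 \<and> (\<forall>u<t. w u \<le> 2)
         \<and> 2 * v 0 = q + s \<and> v 1 = s + 1 \<and> 2 * v 2 = q - s"
proof -
  obtain x0 y0 where xy: "indep2 q x0 y0" "W = span2 q x0 y0"
    using assms(6) unfolding is_line_subspace_def indep2_def span2_def by blast
  have cardp: "card (UNIV :: 'a set) = p ^ (h*3)" using assms(3,4) by (simp add: power_mult)
  have "s dvd q" using assms(8) by simp
  moreover have "q dvd q^3" by simp
  ultimately have "s dvd q^3" by (rule dvd_trans)
  hence "s dvd p^(h*3)" using assms(3) by (simp add: power_mult)
  hence frob: "\<And>u v :: 'a. (u + v)^s = u^s + v^s" using frob_from_card[OF assms(1) cardp] by blast
  have p2: "p \<ge> 2" using assms(1) prime_ge_2_nat by blast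
  have "p \<le> p^h" using assms(2) p2 by (simp add: self_le_power)
  hence "q \<ge> 2" using assms(3) p2 by simp
  have s2: "s \<ge> 2"
  proof (rule ccontr)
    assume "\<not> s \<ge> 2"
    hence "s \<le> 1" by simp
    hence "s = 0 \<or> s = 1" by auto
    hence "s^2 \<le> 1" by auto
    thus False using \<open>q \<ge> 2\<close> assms(8) by simp
  qed
  interpret setting \<alpha> q s x0 y0 W
    by unfold_locales (use frob assms s2 xy in auto)
  have dd: "d = dd" unfolding d_def dd_def using nums(4)[of s q] s2 assms(8) by simp
  have mtd: "q^2+q+1 = tt * dd" by (rule m_eq)
  have ddpos: "dd > 0" unfolding dd_def by simp
  have tt: "t = tt" unfolding t_def dd mtd using ddpos by simp
  have ttv: "tt = q + s + 1" unfolding tt_def using assms(8) by simp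
  have mr: "(\<forall>u. w u \<le> 2) \<and> v 0 + v 1 + v 2 = tt \<and> v 1 + 2 * v 2 = q + 1 \<and> 2 * v 2 = dd - 1"
    using main_result unfolding w_def v_def tt by simp
  have ss: "s \<le> s^2" using nums(5)[of s q] s2 assms(8) by simp
  have dd1: "dd - 1 = q - s" unfolding dd_def using ss assms(8) by simp
  have "d dvd (q^2+q+1)" unfolding dd mtd by simp
  moreover have "v 1 = s + 1" using mr dd1 ss assms(8) by linarith
  moreover have "2 * v 0 = q + s" using mr dd1 ss assms(8) ttv by linarith
  ultimately show ?thesis using mr dd1 tt ttv by simp
qed


end
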